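(* Let $n\ge1$, $p>1$, $\alpha\in\mathbb{R}$, $C>0$, $T>0$, and let $\psi$ be the unique positive solution of $\psi'=\psi^p\ln^\alpha(\psi^2+2)$ with $\psi(t)\to+\infty$ as $t\to T$. For each $T_2<T$ and $\delta>0$ there exists $\epsilon=\epsilon(T,T_2,\delta,n,p)>0$ such that if $v(x,t)$ satisfies $$|\partial_tv-\Delta v|\le C|v|^p\ln^\alpha(v^2+2)\quad\text{and}\quad |v(x,t)|\le\epsilon\,\psi(t)\qquad\text{for all }|x|\le\delta,\ t\in(T_2,T),$$ then $v$ does not blow up at $(0,T)$.
   Context: A function $v$ blows up at $(0,T)$ if there exist $(x_j,t_j)\to(0,T)$ with $|v(x_j,t_j)|\to+\infty$. *)

theory Defs
  imports "HOL-Analysis.Analysis"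
begin

definition time_deriv :: "(real^'n \<Rightarrow> real \<Rightarrow> real) \<Rightarrow> real^'n \<Rightarrow> real \<Rightarrow> real" where
  "time_deriv v x t = deriv (\<lambda>s. v x s) t"

definition second_partial :: "'n \<Rightarrow> (real^'n \<Rightarrow> real \<Rightarrow> real) \<Rightarrow> real^'n \<Rightarrow> real \<Rightarrow> real" where
  "second_partial i v x t = deriv (\<lambda>r. deriv (\<lambda>s. v (x + s *\<^sub>R axis i 1) t) r) 0"

definition laplacian :: "(real^'n \<Rightarrow> real \<Rightarrow> real) \<Rightarrow> real^'n \<Rightarrow> real \<Rightarrow> real" where
  "laplacian v x t = (\<Sum>i\<in>UNIV. second_partial i v x t)"

definition blows_up_at :: "(real^'n \<Rightarrow> real \<Rightarrow> real) \<Rightarrow> real \<Rightarrow> bool" where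
  "blows_up_at v T \<longleftrightarrow> (\<exists>xs ts. (xs \<longlonglongrightarrow> 0) \<and> (ts \<longlonglongrightarrow> T) \<and> (\<forall>j. ts j < T) \<and>
      filterlim (\<lambda>j. \<bar>v (xs j) (ts j)\<bar>) at_top sequentially)"

definition C21_on :: "(real^'n \<Rightarrow> real \<Rightarrow> real) \<Rightarrow> real \<Rightarrow> real \<Rightarrow> real \<Rightarrow> bool" where
  "C21_on v \<delta> T2 T \<longleftrightarrow>
     continuous_on (cball 0 \<delta> \<times> {T2<..<T}) (\<lambda>(x,t). v x t) \<and>
     continuous_on (cball 0 \<delta> \<times> {T2<..<T}) (\<lambda>(x,t). time_deriv v x t) \<and>
     (\<forall>i. continuous_on (cball 0 \<delta> \<times> {T2<..<T}) (\<lambda>(x,t). second_partial i v x t)) \<and>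
     (\<forall>x\<in>cball 0 \<delta>. \<forall>t\<in>{T2<..<T}.
        (\<lambda>s. v x s) differentiable (at t) \<and>
        (\<forall>i. (\<forall>r. (\<lambda>s. v (x + s *\<^sub>R axis i 1) t) differentiable (at r)) \<and>
             (\<lambda>r. deriv (\<lambda>s. v (x + s *\<^sub>R axis i 1) t) r) differentiable (at 0)))"

end

theory Submission
  imports Defs "HOL-Real_Asymp.Real_Asymp"
begin
definition ff :: "real \<Rightarrow> real \<Rightarrow> real \<Rightarrow> real" where
  "ff p a y = y powr p * ln (y\<^sup>2 + 2) powr a"

lemma sq2_pos[simp]: "0 < (y::real)\<^sup>2 + 2"
  using zero_le_power2[of y] by linarith

lemma sq2_ne[simp]: "(y::real)\<^sup>2 + 2 \<noteq> 0"
  using sq2_pos[of y] by linarith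

lemma ln_pos2: "ln ((y::real)\<^sup>2 + 2) > 0"
  by (smt (verit) ln_gt_zero zero_le_power2)

lemma ff_pos: "y > 0 \<Longrightarrow> ff p a y > 0"
  unfolding ff_def using ln_pos2[of y] by simp

lemma ff_deriv:
  assumes "y > 0"
  shows "(ff p a has_real_derivative ff p a y / y * (p + 2*a*y\<^sup>2/((y\<^sup>2+2)*ln(y\<^sup>2+2)))) (at y)"
proof -
  have L: "ln (y\<^sup>2+2) > 0" by (rule ln_pos2)
  have Y: "y\<^sup>2 + 2 > 0" using zero_le_power2[of y] by linarith
  have "((\<lambda>y. y powr p * ln (y\<^sup>2+2) powr a) has_real_derivative
     (p * y powr (p-1) * ln (y\<^sup>2+2) powr a + y powr p * (a * ln (y\<^sup>2+2) powr (a-1) * ((2*y)/(y\<^sup>2+2))))) (at y)"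
    using assms L Y
    by (auto intro!: derivative_eq_intros simp: field_simps)
  moreover have "p * y powr (p-1) * ln (y\<^sup>2+2) powr a + y powr p * (a * ln (y\<^sup>2+2) powr (a-1) * ((2*y)/(y\<^sup>2+2)))
     = ff p a y / y * (p + 2*a*y\<^sup>2/((y\<^sup>2+2)*ln(y\<^sup>2+2)))"
    using assms L Y unfolding ff_def
    by (simp add: powr_diff field_simps power2_eq_square)
  ultimately show ?thesis unfolding ff_def by (simp add: fun_eq_iff)
qed

lemma ff_deriv_bound:
  assumes "y > 0"
  shows "ff p a y / y * (p + 2*a*y\<^sup>2/((y\<^sup>2+2)*ln(y\<^sup>2+2))) \<le> (p + 2*\<bar>a\<bar>/ln 2) * (ff p a y / y)"
proof -
  have L: "ln (y\<^sup>2+2) \<ge> ln 2" using zero_le_power2[of y] by (subst ln_le_cancel_iff) auto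
  have Y: "y\<^sup>2 + 2 > 0" using zero_le_power2[of y] by linarith
  have F: "ff p a y / y > 0" using ff_pos[of y p a] assms by simp
  have q: "y\<^sup>2/(y\<^sup>2+2) \<le> 1" using Y by simp
  have "2*a*y\<^sup>2/((y\<^sup>2+2)*ln(y\<^sup>2+2)) = 2*a*(y\<^sup>2/(y\<^sup>2+2))/ln(y\<^sup>2+2)" by simp
  also have "\<dots> \<le> 2*\<bar>a\<bar>*(y\<^sup>2/(y\<^sup>2+2))/ln(y\<^sup>2+2)"
    using ln_pos2[of y] by (intro divide_right_mono mult_right_mono) auto
  also have "\<dots> \<le> 2*\<bar>a\<bar>*1/ln(y\<^sup>2+2)"
    using ln_pos2[of y] q by (intro divide_right_mono mult_left_mono) auto
  also have "\<dots> \<le> 2*\<bar>a\<bar>/ln 2"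
    using L by (simp add: frac_le)
  finally have "p + 2*a*y\<^sup>2/((y\<^sup>2+2)*ln(y\<^sup>2+2)) \<le> p + 2*\<bar>a\<bar>/ln 2" by simp
  then have "ff p a y / y * (p + 2*a*y\<^sup>2/((y\<^sup>2+2)*ln(y\<^sup>2+2))) \<le> ff p a y / y * (p + 2*\<bar>a\<bar>/ln 2)"
    using F by (intro mult_left_mono) auto
  then show ?thesis by (simp only: mult.commute)
qed

lemma scaling:
  assumes "C > 0" "p > 1"
  shows "\<exists>l>0. l \<le> 1 \<and> (\<forall>y>0. C * ff p a (l*y) \<le> l * ff p a y / 4)"
proof -
  define R where "R = (\<lambda>l::real. 1 + 2*ln(1/l)/ln 2)"
  have lim: "((\<lambda>l::real. C * l powr (p-1) * (1 + 2*ln(1/l)/ln 2) powr \<bar>a\<bar>) \<longlongrightarrow> 0) (at_right 0)"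
    using assms by real_asymp
  have "\<forall>\<^sub>F l in at_right 0. C * l powr (p-1) * (1 + 2*ln(1/l)/ln 2) powr \<bar>a\<bar> < 1/4"
    using order_tendstoD(2)[OF lim, of "1/4"] by simp
  moreover have "\<forall>\<^sub>F l in at_right (0::real). l \<in> {0<..<1}" by (rule eventually_at_right_real) simp
  ultimately have "\<forall>\<^sub>F l in at_right (0::real). l \<in> {0<..<1} \<and> C * l powr (p-1) * R l powr \<bar>a\<bar> < 1/4"
    unfolding R_def by eventually_elim auto
  then obtain l where l: "0 < l" "l < 1" "C * l powr (p-1) * R l powr \<bar>a\<bar> < 1/4"
    using eventually_happens[of _ "at_right (0::real)"] by auto
  have R1: "R l \<ge> 1" using l unfolding R_def by simp
  have key: "ln ((l*y)\<^sup>2+2) powr a \<le> ln (y\<^sup>2+2) powr a * R l powr \<bar>a\<bar>" if "y > 0" for y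
  proof -
    have Lp: "ln ((l*y)\<^sup>2+2) \<ge> ln 2" using zero_le_power2[of "l*y"] by (subst ln_le_cancel_iff) auto
    have A: "ln (y\<^sup>2+2) \<le> ln ((l*y)\<^sup>2+2) * R l"
    proof -
      have e: "(1/l)\<^sup>2 * ((l*y)\<^sup>2+2) = y\<^sup>2 + 2/l\<^sup>2"
        using l by (simp add: field_simps power2_eq_square)
      have "l\<^sup>2 \<le> 1" using l by (simp add: power_le_one)
      then have "2 \<le> 2/l\<^sup>2" using l by (simp add: field_simps)
      then have "y\<^sup>2+2 \<le> (1/l)\<^sup>2 * ((l*y)\<^sup>2+2)" unfolding e by simp
      then have "ln (y\<^sup>2+2) \<le> ln ((1/l)\<^sup>2 * ((l*y)\<^sup>2+2))"
        using l by (subst ln_le_cancel_iff) auto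
      also have "\<dots> = 2 * ln (1/l) + ln ((l*y)\<^sup>2+2)"
        using l zero_le_power2[of "l*y"] by (simp add: ln_mult ln_realpow)
      also have "\<dots> \<le> ln ((l*y)\<^sup>2+2) * R l"
      proof -
        have "2 * ln (1/l) \<ge> 0" using l by simp
        then have "2 * ln (1/l) \<le> ln ((l*y)\<^sup>2+2) * (2*ln(1/l)/ln 2)"
          using Lp by (simp add: field_simps) (metis mult.commute mult_right_mono)
        then show ?thesis unfolding R_def by (simp add: algebra_simps)
      qed
      finally show ?thesis .
    qed
    show ?thesis
    proof (cases "a \<ge> 0")
      case True
      have "l\<^sup>2 \<le> 1" using l by (simp add: power_le_one)
      then have "l\<^sup>2 * y\<^sup>2 \<le> 1 * y\<^sup>2" by (intro mult_right_mono) auto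
      then have "(l*y)\<^sup>2+2 \<le> y\<^sup>2+2" by (simp add: power_mult_distrib)
      then have "ln ((l*y)\<^sup>2+2) \<le> ln (y\<^sup>2+2)"
        by (metis ln_le_cancel_iff sq2_pos)
      then have "ln ((l*y)\<^sup>2+2) powr a \<le> ln (y\<^sup>2+2) powr a"
        using True ln_pos2[of "l*y"] by (intro powr_mono2) auto
      moreover have "R l powr \<bar>a\<bar> \<ge> 1" using R1 True by (simp add: ge_one_powr_ge_zero)
      moreover have "ln (y\<^sup>2+2) powr a \<le> ln (y\<^sup>2+2) powr a * R l powr \<bar>a\<bar>"
        using mult_left_mono[OF \<open>R l powr \<bar>a\<bar> \<ge> 1\<close>, of "ln (y\<^sup>2+2) powr a"] by simp
      ultimately show ?thesis by linarith
    next
      case False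
      have "ln (y\<^sup>2+2) / R l \<le> ln ((l*y)\<^sup>2+2)" using A R1 by (simp add: divide_le_eq)
      then have "ln ((l*y)\<^sup>2+2) powr a \<le> (ln (y\<^sup>2+2) / R l) powr a"
        using False ln_pos2[of y] R1 by (intro powr_mono2') auto
      also have "\<dots> = ln (y\<^sup>2+2) powr a * R l powr \<bar>a\<bar>"
      proof -
        have "(ln (y\<^sup>2+2) / R l) powr a = ln (y\<^sup>2+2) powr a / R l powr a"
          using ln_pos2[of y] R1 by (simp add: powr_divide)
        moreover have "R l powr \<bar>a\<bar> = 1 / R l powr a"
          using False R1 by (simp add: powr_minus_divide)
        ultimately show ?thesis by simp
      qed
      finally show ?thesis .
    qed
  qed
  have "C * ff p a (l*y) \<le> l * ff p a y / 4" if "y > 0" for y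
  proof -
    have "C * ff p a (l*y) = C * l powr p * y powr p * ln ((l*y)\<^sup>2+2) powr a"
      unfolding ff_def using l that by (simp add: powr_mult)
    also have "\<dots> \<le> C * l powr p * y powr p * (ln (y\<^sup>2+2) powr a * R l powr \<bar>a\<bar>)"
      using key[OF that] assms l by (intro mult_left_mono) auto
    also have "\<dots> = (C * l powr (p-1) * R l powr \<bar>a\<bar>) * (l * ff p a y)"
      unfolding ff_def using l by (simp add: powr_diff field_simps)
    also have "\<dots> \<le> (1/4) * (l * ff p a y)"
      using l(3) ff_pos[OF that, of p a] l by (intro mult_right_mono) auto
    finally show ?thesis by simp
  qed
  then show ?thesis using l by (intro exI[of _ l]) auto
qed

find_theorems name: DERIV_nonneg_imp
lemma psi_mono:
  assumes pos: "\<forall>t<T. \<psi> t > 0" and ode: "\<forall>t<T. (\<psi> has_real_derivative ff p a (\<psi> t)) (at t)"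
    and "t1 \<le> t2" "t2 < T"
  shows "\<psi> t1 \<le> \<psi> t2"
  using assms(3,4) 
  by (intro DERIV_nonneg_imp_nondecreasing[OF assms(3)])
     (metis ode pos ff_pos less_eq_real_def order_le_less_trans)

lemma psi_cont:
  assumes ode: "\<forall>t<T. (\<psi> has_real_derivative ff p a (\<psi> t)) (at t)" and "S \<subseteq> {..<T}"
  shows "continuous_on S \<psi>"
  using assms by (intro continuous_at_imp_continuous_on) (auto intro: DERIV_isCont)

lemma ff_cont: "continuous_on {0<..} (ff p a)"
  by (intro continuous_at_imp_continuous_on) (auto intro: DERIV_isCont ff_deriv)

lemma h_mono:
  assumes "p > 1" "exp (2*\<bar>a\<bar>/(p-1)) \<le> y1" "y1 \<le> y2"
  shows "ff ((p-1)/2) a y1 \<le> ff ((p-1)/2) a y2"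
proof (rule DERIV_nonneg_imp_nondecreasing[OF assms(3)])
  fix y assume y: "y1 \<le> y" "y \<le> y2"
  define g where "g = (p-1)/2"
  have y0: "y > 0" using y assms(2) by (smt (verit) exp_gt_zero)
  have D: "(ff g a has_real_derivative ff g a y / y * (g + 2*a*y\<^sup>2/((y\<^sup>2+2)*ln(y\<^sup>2+2)))) (at y)"
    by (rule ff_deriv[OF y0])
  have g0: "g > 0" using assms unfolding g_def by simp
  have "ln y \<ge> 2*\<bar>a\<bar>/(p-1)" using y assms(2) y0
    by (metis exp_le_cancel_iff exp_ln order_trans)
  moreover have "ln (y\<^sup>2+2) \<ge> ln (y\<^sup>2)" using y0 by (subst ln_le_cancel_iff) auto
  moreover have "ln (y\<^sup>2) = 2 * ln y" using y0 by (simp add: ln_realpow)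
  moreover have "2*\<bar>a\<bar>/g = 2*(2*\<bar>a\<bar>/(p-1))" unfolding g_def by simp
  ultimately have L: "ln (y\<^sup>2+2) \<ge> 2*\<bar>a\<bar>/g" by linarith
  have Lp: "ln (y\<^sup>2+2) > 0" by (rule ln_pos2)
  have q: "y\<^sup>2/(y\<^sup>2+2) \<le> 1" by simp
  define X where "X = y\<^sup>2/((y\<^sup>2+2)*ln(y\<^sup>2+2))"
  have X0: "X \<ge> 0" unfolding X_def using Lp by simp
  have "-(2*a*y\<^sup>2/((y\<^sup>2+2)*ln(y\<^sup>2+2))) = (-a) * (2*X)" unfolding X_def by simp
  also have "\<dots> \<le> \<bar>a\<bar> * (2*X)" using X0 by (intro mult_right_mono) auto
  also have "\<dots> = 2*\<bar>a\<bar>*(y\<^sup>2/(y\<^sup>2+2))/ln(y\<^sup>2+2)" unfolding X_def by simp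
  finally have "-(2*a*y\<^sup>2/((y\<^sup>2+2)*ln(y\<^sup>2+2))) \<le> 2*\<bar>a\<bar>*(y\<^sup>2/(y\<^sup>2+2))/ln(y\<^sup>2+2)" .
  also have "\<dots> \<le> 2*\<bar>a\<bar>*1/ln(y\<^sup>2+2)"
    using Lp q by (intro divide_right_mono mult_left_mono) auto
  also have "\<dots> \<le> g"
    using L Lp g0 by (simp add: divide_le_eq mult.commute)
  finally have "g + 2*a*y\<^sup>2/((y\<^sup>2+2)*ln(y\<^sup>2+2)) \<ge> 0" by simp
  then have "0 \<le> ff g a y / y * (g + 2*a*y\<^sup>2/((y\<^sup>2+2)*ln(y\<^sup>2+2)))"
    using ff_pos[OF y0, of g a] y0 by simp
  then show "\<exists>d. (ff ((p-1)/2) a has_real_derivative d) (at y) \<and> 0 \<le> d"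
    using D unfolding g_def by blast
qed

lemma ff_rel: "y > 0 \<Longrightarrow> ff p a y / y = ff ((p-1)/2) a y * y powr ((p-1)/2)"
proof -
  assume y: "y > 0"
  have 1: "y powr ((p-1)/2) * y powr ((p-1)/2) = y powr (p-1)" using y by (simp add: powr_add[symmetric])
  have 2: "y powr p / y = y powr (p-1)" using y by (simp add: powr_diff)
  show ?thesis unfolding ff_def using 1 2
    by (metis (no_types, lifting) mult.commute mult.left_commute times_divide_eq_left)
qed

lemma g_deriv:
  assumes "(\<psi> has_real_derivative ff p a (\<psi> t)) (at t)" "\<psi> t > 0"
  shows "((\<lambda>t. \<psi> t powr (-((p-1)/2))) has_real_derivative (-((p-1)/2)) * ff ((p-1)/2) a (\<psi> t)) (at t)"
proof -
  have "((\<lambda>t. \<psi> t powr (-((p-1)/2))) has_real_derivative (-((p-1)/2)) * \<psi> t powr (-((p-1)/2) - 1) * ff p a (\<psi> t)) (at t)"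
    using assms by (auto intro!: derivative_eq_intros)
  moreover have "\<psi> t powr (-((p-1)/2) - 1) * ff p a (\<psi> t) = ff ((p-1)/2) a (\<psi> t)"
    using assms(2) unfolding ff_def by (simp add: powr_add[symmetric] field_simps)
  ultimately show ?thesis by (simp add: mult.assoc)
qed
lemma div_helper: "0 < (g::real) \<Longrightarrow> 0 < K \<Longrightarrow> x * g * K \<le> 1 \<Longrightarrow> x \<le> 1/g/K"
  by (simp add: field_simps)

lemma div_helper2: "0 < (K::real) \<Longrightarrow> x \<le> c/K \<Longrightarrow> x * K \<le> c"
  by (simp add: le_divide_eq)

lemma le_from_below:
  fixes M T \<tau> :: real
  assumes "\<forall>\<sigma>. \<tau> < \<sigma> \<and> \<sigma> < T \<longrightarrow> \<sigma> - \<tau> \<le> M" "\<tau> < T"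
  shows "T - \<tau> \<le> M"
proof (rule ccontr)
  assume "\<not> T - \<tau> \<le> M"
  then have "M < T - \<tau>" by simp
  define \<sigma> where "\<sigma> = \<tau> + (max M 0 + (T - \<tau>))/2"
  have "\<tau> < \<sigma>" "\<sigma> < T" "\<sigma> - \<tau> > M" using \<open>M < T - \<tau>\<close> assms(2) unfolding \<sigma>_def by (auto simp: max_def field_simps)
  then show False using assms(1) by force
qed

lemma psi_rate:
  assumes p: "p > 1" and pos: "\<forall>t<T. \<psi> t > 0"
    and ode: "\<forall>t<T. (\<psi> has_real_derivative ff p a (\<psi> t)) (at t)"
    and blow: "filterlim \<psi> at_top (at_left T)" and a0: "a0 < T"
  shows "\<exists>B\<ge>0. \<forall>\<tau>. a0 \<le> \<tau> \<and> \<tau> < T \<longrightarrow> (T - \<tau>) * (ff p a (\<psi> \<tau>) / \<psi> \<tau>) \<le> B"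
proof -
  define Y0 where "Y0 = exp (2*\<bar>a\<bar>/(p-1))"
  define g where "g = (p-1)/2"
  have g0: "g > 0" using p unfolding g_def by simp
  have "\<forall>\<^sub>F t in at_left T. Y0 \<le> \<psi> t" using blow by (simp add: filterlim_at_top)
  then obtain b where b: "b < T" "\<forall>y>b. y < T \<longrightarrow> Y0 \<le> \<psi> y"
    unfolding eventually_at_left_field by auto
  define \<tau>0 where "\<tau>0 = max a0 ((b+T)/2)"
  have t0: "\<tau>0 < T" "b < \<tau>0" "a0 \<le> \<tau>0" using b a0 unfolding \<tau>0_def by (auto simp: max_def)
  have part1: "(T - \<tau>) * (ff p a (\<psi> \<tau>) / \<psi> \<tau>) \<le> 1/g" if t: "\<tau>0 \<le> \<tau>" "\<tau> < T" for \<tau>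
  proof -
    have Y: "Y0 \<le> \<psi> \<tau>" using b t t0 by auto
    have pt: "\<psi> \<tau> > 0" using pos t by auto
    have "\<sigma> - \<tau> \<le> 1/g / (ff p a (\<psi> \<tau>) / \<psi> \<tau>)" if s: "\<tau> < \<sigma>" "\<sigma> < T" for \<sigma>
    proof -
      obtain z where z: "\<tau> < z" "z < \<sigma>"
        "\<psi> \<sigma> powr (-g) - \<psi> \<tau> powr (-g) = (\<sigma> - \<tau>) * ((-g) * ff g a (\<psi> z))"
        using MVT2[OF s(1), of "\<lambda>t. \<psi> t powr (-g)" "\<lambda>t. (-g) * ff g a (\<psi> t)"]
          g_deriv[of \<psi> p a] ode pos s unfolding g_def by force
      have "\<psi> \<tau> \<le> \<psi> z" using psi_mono[OF pos ode, of \<tau> z] z s by auto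
      then have hm: "ff g a (\<psi> \<tau>) \<le> ff g a (\<psi> z)"
        using h_mono[OF p, of a "\<psi> \<tau>" "\<psi> z"] Y unfolding Y0_def g_def by auto
      have "\<psi> \<sigma> > 0" using pos s by simp
      then have "\<psi> \<sigma> powr (-g) > 0" by simp
      moreover have "(\<sigma> - \<tau>) * (g * ff g a (\<psi> z)) = \<psi> \<tau> powr (-g) - \<psi> \<sigma> powr (-g)"
        using z(3) by (simp add: algebra_simps)
      ultimately have "(\<sigma> - \<tau>) * (g * ff g a (\<psi> z)) < \<psi> \<tau> powr (-g)" by linarith
      moreover have "(\<sigma> - \<tau>) * (g * ff g a (\<psi> \<tau>)) \<le> (\<sigma> - \<tau>) * (g * ff g a (\<psi> z))"
        using hm s g0 by (intro mult_left_mono) auto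
      ultimately have "(\<sigma> - \<tau>) * (g * ff g a (\<psi> \<tau>)) \<le> \<psi> \<tau> powr (-g)" by linarith
      then have "(\<sigma> - \<tau>) * (g * ff g a (\<psi> \<tau>)) * \<psi> \<tau> powr g \<le> \<psi> \<tau> powr (-g) * \<psi> \<tau> powr g"
        using pt by (intro mult_right_mono) auto
      also have "\<psi> \<tau> powr (-g) * \<psi> \<tau> powr g = 1" using pt by (simp add: powr_add[symmetric])
      finally have "(\<sigma> - \<tau>) * g * (ff p a (\<psi> \<tau>) / \<psi> \<tau>) \<le> 1"
        using ff_rel[OF pt, of p a] unfolding g_def by (simp add: algebra_simps)
      moreover have "ff p a (\<psi> \<tau>) / \<psi> \<tau> > 0" using ff_pos[OF pt] pt by simp
      ultimately show ?thesis using g0 div_helper by blast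
    qed
    then have "T - \<tau> \<le> 1/g / (ff p a (\<psi> \<tau>) / \<psi> \<tau>)"
      using le_from_below t by blast
    moreover have "ff p a (\<psi> \<tau>) / \<psi> \<tau> > 0" using ff_pos[OF pt] pt by simp
    ultimately show ?thesis using div_helper2 by blast
  qed
  have cont: "continuous_on {a0..\<tau>0} (\<lambda>\<tau>. (T - \<tau>) * (ff p a (\<psi> \<tau>) / \<psi> \<tau>))"
  proof -
    have c1: "continuous_on {a0..\<tau>0} \<psi>" using t0 by (intro psi_cont[OF ode]) auto
    have c2: "continuous_on {a0..\<tau>0} (\<lambda>\<tau>. ff p a (\<psi> \<tau>))"
      using pos t0 by (intro continuous_on_compose2[OF ff_cont c1]) auto
    show ?thesis using c1 c2 pos t0 by (intro continuous_intros) (auto, smt (verit))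
  qed
  obtain B2 where B2: "\<forall>\<tau>\<in>{a0..\<tau>0}. (T - \<tau>) * (ff p a (\<psi> \<tau>) / \<psi> \<tau>) \<le> B2"
    using continuous_attains_sup[OF compact_Icc _ cont] t0 by fastforce
  show ?thesis
  proof (intro exI[of _ "max (max B2 (1/g)) 0"] conjI allI impI)
    fix \<tau> assume "a0 \<le> \<tau> \<and> \<tau> < T"
    then show "(T - \<tau>) * (ff p a (\<psi> \<tau>) / \<psi> \<tau>) \<le> max (max B2 (1/g)) 0"
    proof (cases "\<tau> \<le> \<tau>0")
      case True then show ?thesis using B2 \<open>a0 \<le> \<tau> \<and> \<tau> < T\<close> by force
    next
      case False
      then have "(T - \<tau>) * (ff p a (\<psi> \<tau>) / \<psi> \<tau>) \<le> 1/g" using part1 \<open>a0 \<le> \<tau> \<and> \<tau> < T\<close> by simp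
      then show ?thesis by linarith
    qed
  qed auto
qed


definition ffd :: "real \<Rightarrow> real \<Rightarrow> real \<Rightarrow> real" where
  "ffd p a y = ff p a y / y * (p + 2*a*y\<^sup>2/((y\<^sup>2+2)*ln(y\<^sup>2+2)))"

lemma norm_line: "(norm (x + s *\<^sub>R axis i 1 :: real^'n))\<^sup>2 = (norm x)\<^sup>2 + 2* s*(x$i) + s\<^sup>2"
proof -
  have "(norm (x + s *\<^sub>R axis i 1))\<^sup>2 = (x + s *\<^sub>R axis i 1) \<bullet> (x + s *\<^sub>R axis i 1)"
    by (rule power2_norm_eq_inner)
  also have "\<dots> = x \<bullet> x + 2 * s * (x \<bullet> axis i 1) + s\<^sup>2 * (axis i 1 \<bullet> axis i (1::real))"
    by (simp add: inner_add_left inner_add_right inner_commute algebra_simps power2_eq_square)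
  also have "\<dots> = (norm x)\<^sup>2 + 2 * s * (x$i) + s\<^sup>2"
    by (simp add: inner_axis inner_axis_axis power2_norm_eq_inner)
  finally show ?thesis .
qed

lemma line_deriv:
  fixes x :: "real^'n" and i :: 'n and \<delta> lam \<mu> t :: real
  assumes pos: "\<forall>t<T. \<psi> t > 0" and ode: "\<forall>t<T. (\<psi> has_real_derivative ff p a (\<psi> t)) (at t)"
    and mu: "\<mu> \<ge> 0" and t: "t < T"
  defines "Q \<equiv> \<lambda>s. \<delta>\<^sup>2 - (norm x)\<^sup>2 - 2* s*(x$i) - s\<^sup>2"
  defines "D1 \<equiv> \<lambda>s. lam * ff p a (\<psi> (t - \<mu> * (Q s)\<^sup>2)) * (4*\<mu>*Q s*(x$i+s))"
  shows "\<And>s. ((\<lambda>s. lam * \<psi> (t - \<mu> * (\<delta>\<^sup>2 - (norm (x + s *\<^sub>R axis i 1))\<^sup>2)\<^sup>2)) has_real_derivative D1 s) (at s)"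
    and "(D1 has_real_derivative
          lam * ff p a (\<psi> (t - \<mu> * (Q 0)\<^sup>2)) * (ffd p a (\<psi> (t - \<mu> * (Q 0)\<^sup>2)) * (4*\<mu>*Q 0*(x$i))\<^sup>2 + 4*\<mu>*(Q 0 - 2*(x$i)\<^sup>2))) (at 0)"
proof -
  have tau_lt: "t - \<mu> * (Q s)\<^sup>2 < T" for s using mu t by (smt (verit) mult_nonneg_nonneg zero_le_power2)
  have psi_d: "(\<psi> has_real_derivative ff p a (\<psi> (t - \<mu> * (Q s)\<^sup>2))) (at (t - \<mu> * (Q s)\<^sup>2))" for s
    using ode tau_lt by blast
  have Q_d: "(Q has_real_derivative (-2*(x$i) - 2* s)) (at s)" for s
    unfolding Q_def by (auto intro!: derivative_eq_intros)
  have tau_d: "((\<lambda>s. t - \<mu> * (Q s)\<^sup>2) has_real_derivative (4*\<mu>*Q s*(x$i+s))) (at s)" for s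
    by (auto intro!: derivative_eq_intros Q_d simp: algebra_simps power2_eq_square)
  have comp_d: "((\<lambda>s. \<psi> (t - \<mu> * (Q s)\<^sup>2)) has_real_derivative ff p a (\<psi> (t - \<mu> * (Q s)\<^sup>2)) * (4*\<mu>*Q s*(x$i+s))) (at s)" for s
    using DERIV_chain2[OF psi_d tau_d] .
  show "((\<lambda>s. lam * \<psi> (t - \<mu> * (\<delta>\<^sup>2 - (norm (x + s *\<^sub>R axis i 1))\<^sup>2)\<^sup>2)) has_real_derivative D1 s) (at s)" for s
  proof -
    have e: "(\<lambda>s. lam * \<psi> (t - \<mu> * (\<delta>\<^sup>2 - (norm (x + s *\<^sub>R axis i 1))\<^sup>2)\<^sup>2)) = (\<lambda>s. lam * \<psi> (t - \<mu> * (Q s)\<^sup>2))"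
      unfolding Q_def by (simp add: norm_line algebra_simps)
    show ?thesis unfolding e D1_def using DERIV_cmult[OF comp_d, of lam] by (simp add: mult.assoc)
  qed
  have psi_pos: "\<psi> (t - \<mu> * (Q s)\<^sup>2) > 0" for s using pos tau_lt by blast
  have ffpsi_d: "((\<lambda>s. ff p a (\<psi> (t - \<mu> * (Q s)\<^sup>2))) has_real_derivative
      ffd p a (\<psi> (t - \<mu> * (Q s)\<^sup>2)) * (ff p a (\<psi> (t - \<mu> * (Q s)\<^sup>2)) * (4*\<mu>*Q s*(x$i+s)))) (at s)" for s
    unfolding ffd_def using DERIV_chain2[OF ff_deriv[OF psi_pos] comp_d] .
  have lin_d: "((\<lambda>s. 4*\<mu>*Q s*(x$i+s)) has_real_derivative 4*\<mu>*((-2*(x$i) - 2* s)*(x$i+s) + Q s)) (at s)" for s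
    by (auto intro!: derivative_eq_intros Q_d simp: algebra_simps)
  show "(D1 has_real_derivative
          lam * ff p a (\<psi> (t - \<mu> * (Q 0)\<^sup>2)) * (ffd p a (\<psi> (t - \<mu> * (Q 0)\<^sup>2)) * (4*\<mu>*Q 0*(x$i))\<^sup>2 + 4*\<mu>*(Q 0 - 2*(x$i)\<^sup>2))) (at 0)"
    unfolding D1_def
    using DERIV_mult[OF DERIV_cmult[OF ffpsi_d[of 0], of lam] lin_d[of 0]]
    by (simp add: algebra_simps power2_eq_square)
qed


lemma second_deriv_min:
  fixes g g' :: "real \<Rightarrow> real"
  assumes gd: "\<forall>r. (g has_real_derivative g' r) (at r)" and g'd: "(g' has_real_derivative D) (at 0)"
    and e: "e > 0" and mn: "\<forall>s. \<bar>s\<bar> < e \<longrightarrow> g 0 \<le> g s"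
  shows "D \<ge> 0"
proof (rule ccontr)
  assume "\<not> D \<ge> 0"
  then have D: "D < 0" by simp
  have g'0: "g' 0 = 0"
    using DERIV_local_min[OF gd[rule_format, of 0] e] mn by auto
  have "((\<lambda>s. (g' s - g' 0) / (s - 0)) \<longlongrightarrow> D) (at 0)"
    using g'd by (simp add: has_field_derivative_iff)
  then have "((\<lambda>s. g' s / s) \<longlongrightarrow> D) (at 0)" using g'0 by simp
  then have "\<forall>\<^sub>F s in at 0. g' s / s < 0" using order_tendstoD(2)[of _ D _ 0] D by blast
  then obtain d where d: "d > 0" "\<forall>s. s \<noteq> 0 \<and> dist s 0 < d \<longrightarrow> g' s / s < 0"
    unfolding eventually_at by auto
  define s0 where "s0 = min d e / 2"
  have s0: "0 < s0" "s0 < d" "s0 < e" using d e unfolding s0_def by auto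
  obtain z where z: "0 < z" "z < s0" "g s0 - g 0 = (s0 - 0) * g' z"
    using MVT2[OF s0(1), of g g'] gd by auto
  have "g' z / z < 0" using d z s0 by auto
  then have "g' z < 0" using z by (simp add: divide_less_0_iff)
  then have "s0 * g' z < 0" using s0 by (simp add: mult_pos_neg)
  then have "g s0 < g 0" using z by simp
  moreover have "g 0 \<le> g s0" using mn s0 by auto
  ultimately show False by simp
qed

lemma deriv_left_min:
  fixes k :: "real \<Rightarrow> real"
  assumes kd: "(k has_real_derivative D) (at t)" and e: "e > 0"
    and mn: "\<forall>s. t - e < s \<and> s < t \<longrightarrow> k t \<le> k s"
  shows "D \<le> 0"
proof -
  have "((\<lambda>s. (k s - k t) / (s - t)) \<longlongrightarrow> D) (at t)"
    using kd by (simp add: has_field_derivative_iff)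
  then have lim: "((\<lambda>s. (k s - k t) / (s - t)) \<longlongrightarrow> D) (at_left t)"
    by (rule tendsto_mono[OF at_le, rotated]) simp
  have "\<forall>\<^sub>F s in at_left t. s \<in> {t-e<..<t}" using e by (intro eventually_at_left_real) simp
  then have "\<forall>\<^sub>F s in at_left t. (k s - k t) / (s - t) \<le> 0"
  proof eventually_elim
    case (elim s)
    then have "k s - k t \<ge> 0" "s - t < 0" using mn by auto
    then show ?case by (simp add: divide_nonneg_neg)
  qed
  then show ?thesis using tendsto_upperbound[OF lim] by simp
qed
theorem lemmaA4:
  fixes p \<alpha> C T :: real and \<psi> :: "real \<Rightarrow> real"
  assumes "p > 1" and "C > 0" and "T > 0"
    and psi_pos: "\<forall>t<T. \<psi> t > 0"
    and psi_ode: "\<forall>t<T. (\<psi> has_real_derivative (\<psi> t powr p * (ln ((\<psi> t)\<^sup>2 + 2)) powr \<alpha>)) (at t)"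
    and psi_blowup: "filterlim \<psi> at_top (at_left T)"
  shows "\<forall>T2 < T. \<forall>\<delta> > 0. \<exists>\<epsilon> > 0. \<forall>v :: real^'n \<Rightarrow> real \<Rightarrow> real.
           C21_on v \<delta> T2 T \<and>
           (\<forall>x\<in>cball 0 \<delta>. \<forall>t\<in>{T2<..<T}.
              \<bar>time_deriv v x t - laplacian v x t\<bar> \<le> C * \<bar>v x t\<bar> powr p * (ln ((v x t)\<^sup>2 + 2)) powr \<alpha>
              \<and> \<bar>v x t\<bar> \<le> \<epsilon> * \<psi> t)
           \<longrightarrow> \<not> blows_up_at v T"
proof (intro allI impI)
  fix T2 \<delta> :: real
  assume T2: "T2 < T" and \<delta>: "\<delta> > 0"
  have p: "p > 1" by fact
  have ode: "\<forall>t<T. (\<psi> has_real_derivative ff p \<alpha> (\<psi> t)) (at t)"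
    using psi_ode unfolding ff_def .
  have mono: "\<psi> t1 \<le> \<psi> t2" if "t1 \<le> t2" "t2 < T" for t1 t2
    using psi_mono[OF psi_pos ode that] .
  define T2' where "T2' = (T2 + T)/2"
  have T2': "T2 < T2'" "T2' < T" using T2 unfolding T2'_def by auto
  define a0 where "a0 = T2' - \<delta>\<^sup>2 * \<delta>\<^sup>2"
  have a0: "a0 < T" using T2' unfolding a0_def by (smt (verit) zero_le_power2 mult_nonneg_nonneg)
  obtain B where B: "B \<ge> 0" "\<forall>\<tau>. a0 \<le> \<tau> \<and> \<tau> < T \<longrightarrow> (T - \<tau>) * (ff p \<alpha> (\<psi> \<tau>) / \<psi> \<tau>) \<le> B"
    using psi_rate[OF p psi_pos ode psi_blowup a0] by blast
  define K where "K = p + 2*\<bar>\<alpha>\<bar>/ln 2"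
  have K: "K > 0" using p unfolding K_def by (smt (verit) divide_nonneg_pos ln_gt_zero abs_ge_zero)
  obtain lam where lam: "lam > 0" "lam \<le> 1" "\<forall>y>0. C * ff p \<alpha> (lam*y) \<le> lam * ff p \<alpha> y / 4"
    using scaling[OF \<open>C > 0\<close> p] by blast
  define N where "N = real CARD('n)"
  have N: "N \<ge> 0" unfolding N_def by simp
  define \<mu> where "\<mu> = 1 / (64*\<delta>\<^sup>2*K*B + 16*N*\<delta>\<^sup>2 + 1)"
  have den: "64*\<delta>\<^sup>2*K*B + 16*N*\<delta>\<^sup>2 + 1 \<ge> 1" using K B N by simp
  have mu: "\<mu> > 0" "\<mu> \<le> 1" using den unfolding \<mu>_def by auto
  have X0: "\<delta>\<^sup>2*K*B \<ge> 0" using K B by simp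
  have Y0: "N*\<delta>\<^sup>2 \<ge> 0" using N by simp
  have mu1: "16*\<mu>*\<delta>\<^sup>2*K*B \<le> 1/4"
    using X0 Y0 unfolding \<mu>_def by (simp add: field_simps)
  have mu2: "4*\<mu>*N*\<delta>\<^sup>2 \<le> 1/4"
    using X0 Y0 unfolding \<mu>_def by (simp add: field_simps)
  define W where "W = (\<lambda>(x::real^'n) t. lam * \<psi> (t - \<mu> * (\<delta>\<^sup>2 - (norm x)\<^sup>2)\<^sup>2))"
  define \<epsilon> where "\<epsilon> = lam * \<psi> (T2' - \<mu> * \<delta>\<^sup>2 * \<delta>\<^sup>2) / (2 * \<psi> T2')"
  have psi_posT2: "\<psi> (T2' - \<mu> * \<delta>\<^sup>2 * \<delta>\<^sup>2) > 0" "\<psi> T2' > 0"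
  proof -
    have "\<mu> * \<delta>\<^sup>2 * \<delta>\<^sup>2 \<ge> 0" using mu by simp
    then have "T2' - \<mu> * \<delta>\<^sup>2 * \<delta>\<^sup>2 < T" using T2' by linarith
    then show "\<psi> (T2' - \<mu> * \<delta>\<^sup>2 * \<delta>\<^sup>2) > 0" "\<psi> T2' > 0" using psi_pos T2' by auto
  qed
  have eps: "\<epsilon> > 0" unfolding \<epsilon>_def using psi_posT2 lam by simp
  have psi_le: "\<psi> (T2' - \<mu> * \<delta>\<^sup>2 * \<delta>\<^sup>2) \<le> \<psi> T2'"
    using mono[of "T2' - \<mu> * \<delta>\<^sup>2 * \<delta>\<^sup>2" T2'] T2' mu by (simp add: mult_nonneg_nonneg)
  have eps_le: "\<epsilon> \<le> lam / 2" unfolding \<epsilon>_def using psi_le psi_posT2 lam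
    by (simp add: field_simps)
  have qb: "0 \<le> \<delta>\<^sup>2 - (norm y)\<^sup>2" "\<delta>\<^sup>2 - (norm y)\<^sup>2 \<le> \<delta>\<^sup>2" if "y \<in> cball (0::real^'n) \<delta>" for y
  proof -
    have "norm y \<le> \<delta>" using that by simp
    then have "(norm y)\<^sup>2 \<le> \<delta>\<^sup>2" by (simp add: power_mono)
    then show "0 \<le> \<delta>\<^sup>2 - (norm y)\<^sup>2" "\<delta>\<^sup>2 - (norm y)\<^sup>2 \<le> \<delta>\<^sup>2" by auto
  qed
  have qsq: "(\<delta>\<^sup>2 - (norm y)\<^sup>2)\<^sup>2 \<le> \<delta>\<^sup>2 * \<delta>\<^sup>2" if "y \<in> cball (0::real^'n) \<delta>" for y
    using qb[OF that] by (simp add: power2_eq_square mult_mono)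
  have tau_lt: "s - \<mu> * (\<delta>\<^sup>2 - (norm y)\<^sup>2)\<^sup>2 < T" if "s < T" for s and y :: "real^'n"
  proof -
    have "\<mu> * (\<delta>\<^sup>2 - (norm y)\<^sup>2)\<^sup>2 \<ge> 0" using mu by simp
    then show ?thesis using that by linarith
  qed
  have Wpos: "W y s > 0" if "s < T" for y s
    unfolding W_def using psi_pos tau_lt[OF that] lam by simp
  have Wt: "((\<lambda>s. W y s) has_real_derivative lam * ff p \<alpha> (\<psi> (s - \<mu> * (\<delta>\<^sup>2 - (norm y)\<^sup>2)\<^sup>2))) (at s)"
    if "s < T" for y s
  proof -
    have "((\<lambda>s. s - \<mu> * (\<delta>\<^sup>2 - (norm y)\<^sup>2)\<^sup>2) has_real_derivative 1) (at s)"
      by (auto intro!: derivative_eq_intros)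
    from DERIV_chain2[OF ode[rule_format, OF tau_lt[OF that]] this]
    show ?thesis unfolding W_def using DERIV_cmult by fastforce
  qed
  show "\<exists>\<epsilon>>0. \<forall>v :: real^'n \<Rightarrow> real \<Rightarrow> real.
           C21_on v \<delta> T2 T \<and>
           (\<forall>x\<in>cball 0 \<delta>. \<forall>t\<in>{T2<..<T}.
              \<bar>time_deriv v x t - laplacian v x t\<bar> \<le> C * \<bar>v x t\<bar> powr p * (ln ((v x t)\<^sup>2 + 2)) powr \<alpha>
              \<and> \<bar>v x t\<bar> \<le> \<epsilon> * \<psi> t)
           \<longrightarrow> \<not> blows_up_at v T"
  proof (intro exI[of _ \<epsilon>] conjI allI impI eps)
    fix v :: "real^'n \<Rightarrow> real \<Rightarrow> real"
    assume A: "C21_on v \<delta> T2 T \<and>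
           (\<forall>x\<in>cball 0 \<delta>. \<forall>t\<in>{T2<..<T}.
              \<bar>time_deriv v x t - laplacian v x t\<bar> \<le> C * \<bar>v x t\<bar> powr p * (ln ((v x t)\<^sup>2 + 2)) powr \<alpha>
              \<and> \<bar>v x t\<bar> \<le> \<epsilon> * \<psi> t)"
    have cv: "continuous_on (cball 0 \<delta> \<times> {T2<..<T}) (\<lambda>(x,t). v x t)"
      and dv: "\<forall>x\<in>cball 0 \<delta>. \<forall>t\<in>{T2<..<T}.
        (\<lambda>s. v x s) differentiable (at t) \<and>
        (\<forall>i. (\<forall>r. (\<lambda>s. v (x + s *\<^sub>R axis i 1) t) differentiable (at r)) \<and>
             (\<lambda>r. deriv (\<lambda>s. v (x + s *\<^sub>R axis i 1) t) r) differentiable (at 0))"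
      using A unfolding C21_on_def by blast+
    have Hpde: "\<bar>time_deriv v x t - laplacian v x t\<bar> \<le> C * \<bar>v x t\<bar> powr p * (ln ((v x t)\<^sup>2 + 2)) powr \<alpha>"
      and Hb: "\<bar>v x t\<bar> \<le> \<epsilon> * \<psi> t" if "x \<in> cball 0 \<delta>" "t \<in> {T2<..<T}" for x t
      using A that by blast+
    have vt: "((\<lambda>s. v y s) has_real_derivative time_deriv v y s) (at s)"
      if "y \<in> cball 0 \<delta>" "s \<in> {T2<..<T}" for y s
      using dv that unfolding time_deriv_def by (simp add: DERIV_deriv_iff_real_differentiable)
    have cmp: "\<sigma> * v x t \<le> W x t"
      if sig: "\<sigma> = 1 \<or> \<sigma> = -1" and x: "x \<in> cball 0 \<delta>" and t: "T2' \<le> t" "t < T" for \<sigma> x t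
    proof (rule ccontr)
      assume neg: "\<not> \<sigma> * v x t \<le> W x t"
      define h where "h = (\<lambda>z::((real^'n) \<times> real). W (fst z) (snd z) - \<sigma> * v (fst z) (snd z))"
      define D where "D = cball (0::real^'n) \<delta> \<times> {T2'..t}"
      define S where "S = D \<inter> h -` {..0}"
      have DS: "D \<subseteq> cball 0 \<delta> \<times> {T2<..<T}" unfolding D_def using T2' t by auto
      have hcont: "continuous_on D h"
      proof -
        have "continuous_on D (\<lambda>(x,t). v x t)" using continuous_on_subset[OF cv DS] .
        then have c1: "continuous_on D (\<lambda>z. v (fst z) (snd z))" by (simp add: split_def)
        have pc: "continuous_on {..<T} \<psi>" using psi_cont[OF ode, of "{..<T}"] by simp
        have gc: "continuous_on D (\<lambda>z. snd z - \<mu> * (\<delta>\<^sup>2 - (norm (fst z))\<^sup>2)\<^sup>2)"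
          by (intro continuous_intros)
        have gi: "(\<lambda>z. snd z - \<mu> * (\<delta>\<^sup>2 - (norm (fst z))\<^sup>2)\<^sup>2) ` D \<subseteq> {..<T}"
          using tau_lt t unfolding D_def by auto
        have c2: "continuous_on D (\<lambda>z. \<psi> (snd z - \<mu> * (\<delta>\<^sup>2 - (norm (fst z))\<^sup>2)\<^sup>2))"
          by (rule continuous_on_compose2[OF pc gc gi])
        show ?thesis unfolding h_def W_def using c1 c2 by (intro continuous_intros) auto
      qed
      have Sc: "compact S"
      proof -
        have "closed (D \<inter> h -` {..0})"
          using continuous_closed_preimage[OF hcont] unfolding D_def
          by (simp add: closed_Times)
        moreover have "compact D" unfolding D_def by (intro compact_Times) auto
        ultimately have "compact (D \<inter> (D \<inter> h -` {..0}))" by (intro compact_Int_closed)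
        then show ?thesis unfolding S_def by (simp add: Int_absorb)
      qed
      have "h (x, t) \<le> 0" using neg unfolding h_def by simp
      moreover have "(x, t) \<in> D" unfolding D_def using x t by simp
      ultimately have Sne: "(x, t) \<in> S" unfolding S_def by simp
      have Sne': "S \<noteq> {}" using Sne by auto
      have csnd: "continuous_on S snd" by (intro continuous_intros)
      obtain z where zS: "z \<in> S" and zmin: "\<forall>y\<in>S. snd z \<le> snd y"
        using continuous_attains_inf[OF Sc Sne' csnd] by blast
      obtain xs ts where zeq: "z = (xs, ts)" by fastforce
      have xs: "xs \<in> cball 0 \<delta>" and ts: "T2' \<le> ts" "ts \<le> t" and hz: "h (xs, ts) \<le> 0"
        using zS unfolding zeq S_def D_def by simp_all
      have PB1: "h (y, T2') > 0" if y: "y \<in> cball 0 \<delta>" for y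
      proof -
        have "T2' - \<mu> * \<delta>\<^sup>2 * \<delta>\<^sup>2 \<le> T2' - \<mu> * (\<delta>\<^sup>2 - (norm y)\<^sup>2)\<^sup>2"
          using qsq[OF y] mu by (simp add: mult_left_mono mult.assoc)
        then have "\<psi> (T2' - \<mu> * \<delta>\<^sup>2 * \<delta>\<^sup>2) \<le> \<psi> (T2' - \<mu> * (\<delta>\<^sup>2 - (norm y)\<^sup>2)\<^sup>2)"
          using mono tau_lt[OF T2'(2), of y] by blast
        then have W1: "lam * \<psi> (T2' - \<mu> * \<delta>\<^sup>2 * \<delta>\<^sup>2) \<le> W y T2'"
          unfolding W_def using lam by simp
        have "\<sigma> * v y T2' \<le> \<bar>v y T2'\<bar>" using sig by auto
        also have "\<dots> \<le> \<epsilon> * \<psi> T2'" using Hb[OF y] T2' by auto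
        also have "\<dots> = lam * \<psi> (T2' - \<mu> * \<delta>\<^sup>2 * \<delta>\<^sup>2) / 2"
          unfolding \<epsilon>_def using psi_posT2 by simp
        also have "\<dots> < lam * \<psi> (T2' - \<mu> * \<delta>\<^sup>2 * \<delta>\<^sup>2)" using psi_posT2 lam by simp
        finally show ?thesis unfolding h_def using W1 by simp
      qed
      have PB2: "h (y, s) > 0" if y: "norm y = \<delta>" and s: "T2' \<le> s" "s < T" for y s
      proof -
        have yc: "y \<in> cball 0 \<delta>" using y by simp
        have "W y s = lam * \<psi> s" unfolding W_def using y by simp
        have "\<sigma> * v y s \<le> \<bar>v y s\<bar>" using sig by auto
        also have "\<dots> \<le> \<epsilon> * \<psi> s" using Hb[OF yc] T2' s by auto
        also have "\<dots> \<le> lam / 2 * \<psi> s" using eps_le psi_pos s by (simp add: mult_right_mono)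
        also have "\<dots> < lam * \<psi> s" using psi_pos s lam by simp
        finally show ?thesis unfolding h_def using \<open>W y s = lam * \<psi> s\<close> by simp
      qed
      have ts_gt: "T2' < ts" using PB1[OF xs] hz ts(1) by (cases "ts = T2'") auto
      have xs_lt: "norm xs < \<delta>" using PB2[of xs ts] hz ts t xs by (cases "norm xs = \<delta>") auto
      have tsT: "ts < T" using ts t by simp
      have E: "h (y, s) \<ge> 0" if y: "y \<in> cball 0 \<delta>" and s: "T2' < s" "s \<le> ts" for y s
      proof (rule ccontr)
        assume "\<not> h (y, s) \<ge> 0"
        then have hn: "h (y, s) < 0" by simp
        have sT: "s \<in> {T2<..<T}" using s ts t T2' by auto
        have kd: "((\<lambda>s'. h (y, s')) has_real_derivative
                    lam * ff p \<alpha> (\<psi> (s - \<mu> * (\<delta>\<^sup>2 - (norm y)\<^sup>2)\<^sup>2)) - \<sigma> * time_deriv v y s) (at s)"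
          unfolding h_def using Wt[of s y] vt[OF y sT] sT by (auto intro!: derivative_eq_intros)
        then have "isCont (\<lambda>s'. h (y, s')) s" by (rule DERIV_isCont)
        then have "((\<lambda>s'. h (y, s')) \<longlongrightarrow> h (y, s)) (at_left s)"
          by (simp add: isCont_def filterlim_at_split)
        then have "\<forall>\<^sub>F s' in at_left s. h (y, s') < 0" using order_tendstoD(2) hn by blast
        moreover have "\<forall>\<^sub>F s' in at_left s. s' \<in> {T2'<..<s}" using s by (intro eventually_at_left_real) simp
        ultimately have "\<forall>\<^sub>F s' in at_left s. h (y, s') < 0 \<and> s' \<in> {T2'<..<s}"
          by eventually_elim auto
        then obtain s' where s': "h (y, s') < 0" "T2' < s'" "s' < s"
          using eventually_happens[of _ "at_left s"] by auto
        have "(y, s') \<in> S" unfolding S_def D_def using s' y s ts by auto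
        then have "ts \<le> s'" using zmin zeq by force
        then show False using s' s by simp
      qed
      have hz0: "h (xs, ts) = 0" using E[OF xs ts_gt] hz by simp
      then have sv: "\<sigma> * v xs ts = W xs ts" unfolding h_def by simp
      have tsI: "ts \<in> {T2<..<T}" using ts_gt T2' tsT by auto
      define q where "q = \<delta>\<^sup>2 - (norm xs)\<^sup>2"
      define \<tau>s where "\<tau>s = ts - \<mu> * q\<^sup>2"
      define F where "F = ff p \<alpha> (\<psi> \<tau>s)"
      define F' where "F' = ffd p \<alpha> (\<psi> \<tau>s)"
      have tauT: "\<tau>s < T" unfolding \<tau>s_def q_def using tau_lt[OF tsT] .
      have psis: "\<psi> \<tau>s > 0" using psi_pos tauT by simp
      have Fpos: "F > 0" unfolding F_def using ff_pos[OF psis] .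
      have Wxs: "W xs ts = lam * \<psi> \<tau>s" unfolding W_def \<tau>s_def q_def by simp
      have time_ineq: "lam * F - \<sigma> * time_deriv v xs ts \<le> 0"
      proof (rule deriv_left_min[where k = "\<lambda>s. h (xs, s)" and e = "ts - T2'"])
        show "((\<lambda>s. h (xs, s)) has_real_derivative lam * F - \<sigma> * time_deriv v xs ts) (at ts)"
          unfolding h_def F_def \<tau>s_def q_def using Wt[OF tsT, of xs] vt[OF xs tsI]
          by (auto intro!: derivative_eq_intros)
        show "ts - T2' > 0" using ts_gt by simp
        show "\<forall>s. ts - (ts - T2') < s \<and> s < ts \<longrightarrow> h (xs, ts) \<le> h (xs, s)"
          using E[OF xs] hz0 by auto
      qed
      define D2 where "D2 = (\<lambda>i. lam * F * (F' * (4*\<mu>*q*(xs$i))\<^sup>2 + 4*\<mu>*(q - 2*(xs$i)\<^sup>2)))"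
      have space_ineq: "\<sigma> * second_partial i v xs ts \<le> D2 i" for i
      proof -
        define vl where "vl = (\<lambda>r. v (xs + r *\<^sub>R axis i 1) ts)"
        define D1 where "D1 = (\<lambda>r. lam * ff p \<alpha> (\<psi> (ts - \<mu> * (\<delta>\<^sup>2 - (norm xs)\<^sup>2 - 2 * r * (xs$i) - r\<^sup>2)\<^sup>2)) *
              (4*\<mu>*(\<delta>\<^sup>2 - (norm xs)\<^sup>2 - 2 * r * (xs$i) - r\<^sup>2)*(xs$i+r)))"
        have Wl: "((\<lambda>r. W (xs + r *\<^sub>R axis i 1) ts) has_real_derivative D1 r) (at r)" for r
          using line_deriv(1)[where x=xs and i=i and \<delta>=\<delta> and lam=lam, OF psi_pos ode mu(1)[THEN less_imp_le] tsT]
          unfolding W_def D1_def by simp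
        have Wl2: "(D1 has_real_derivative D2 i) (at 0)"
          using line_deriv(2)[where x=xs and i=i and \<delta>=\<delta> and lam=lam, OF psi_pos ode mu(1)[THEN less_imp_le] tsT]
          unfolding D1_def D2_def F_def F'_def \<tau>s_def q_def by simp
        have dl: "\<forall>r. vl differentiable (at r)" "(\<lambda>r. deriv vl r) differentiable (at 0)"
          using dv xs tsI unfolding vl_def by blast+
        have vl1: "(vl has_real_derivative deriv vl r) (at r)" for r
          using dl(1) by (simp add: DERIV_deriv_iff_real_differentiable)
        have vl2: "(deriv vl has_real_derivative second_partial i v xs ts) (at 0)"
          using dl(2) unfolding second_partial_def vl_def by (simp add: DERIV_deriv_iff_real_differentiable)
        have "0 \<le> D2 i - \<sigma> * second_partial i v xs ts"
        proof (rule second_deriv_min[where g = "\<lambda>r. W (xs + r *\<^sub>R axis i 1) ts - \<sigma> * vl r"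
              and g' = "\<lambda>r. D1 r - \<sigma> * deriv vl r" and e = "\<delta> - norm xs"])
          show "\<forall>r. ((\<lambda>r. W (xs + r *\<^sub>R axis i 1) ts - \<sigma> * vl r) has_real_derivative D1 r - \<sigma> * deriv vl r) (at r)"
            using Wl vl1 by (auto intro!: derivative_eq_intros)
          show "((\<lambda>r. D1 r - \<sigma> * deriv vl r) has_real_derivative D2 i - \<sigma> * second_partial i v xs ts) (at 0)"
            using Wl2 vl2 by (auto intro!: derivative_eq_intros)
          show "\<delta> - norm xs > 0" using xs_lt by simp
          show "\<forall>s. \<bar>s\<bar> < \<delta> - norm xs \<longrightarrow> W (xs + 0 *\<^sub>R axis i 1) ts - \<sigma> * vl 0 \<le> W (xs + s *\<^sub>R axis i 1) ts - \<sigma> * vl s"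
          proof (intro allI impI)
            fix s assume "\<bar>s\<bar> < \<delta> - norm xs"
            then have "norm (xs + s *\<^sub>R axis i 1) \<le> \<delta>"
              using norm_triangle_ineq[of xs "s *\<^sub>R axis i 1"] by (simp add: norm_axis_1)
            then have "h (xs + s *\<^sub>R axis i 1, ts) \<ge> 0" using E[of _ ts] ts_gt by simp
            then show "W (xs + 0 *\<^sub>R axis i 1) ts - \<sigma> * vl 0 \<le> W (xs + s *\<^sub>R axis i 1) ts - \<sigma> * vl s"
              using hz0 unfolding h_def vl_def by simp
          qed
        qed
        then show ?thesis by simp
      qed
      have lap_ineq: "\<sigma> * laplacian v xs ts \<le> (\<Sum>i\<in>UNIV. D2 i)"
        unfolding laplacian_def sum_distrib_left by (intro sum_mono space_ineq)
      have sumc: "(\<Sum>i\<in>UNIV. (xs$i)\<^sup>2) = (norm xs)\<^sup>2"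
      proof -
        have "(norm xs)\<^sup>2 = xs \<bullet> xs" by (rule power2_norm_eq_inner)
        also have "\<dots> = (\<Sum>i\<in>UNIV. (xs$i)\<^sup>2)" by (simp add: inner_vec_def power2_eq_square)
        finally show ?thesis by simp
      qed
      have sumD2: "(\<Sum>i\<in>UNIV. D2 i) = lam * F * (F' * (16*\<mu>\<^sup>2*q\<^sup>2*(norm xs)\<^sup>2) + 4*\<mu>*(N*q - 2*(norm xs)\<^sup>2))"
      proof -
        have "(\<Sum>i\<in>UNIV. D2 i) = (\<Sum>i\<in>UNIV. lam * F * (F' * 16*\<mu>\<^sup>2*q\<^sup>2) * (xs$i)\<^sup>2 + lam * F * 4*\<mu>*q - lam * F * 8*\<mu> * (xs$i)\<^sup>2)"
          unfolding D2_def by (intro sum.cong) (auto simp: algebra_simps power2_eq_square)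
        also have "\<dots> = lam * F * (F' * 16*\<mu>\<^sup>2*q\<^sup>2) * (\<Sum>i\<in>UNIV. (xs$i)\<^sup>2) + N * (lam * F * 4*\<mu>*q) - lam * F * 8*\<mu> * (\<Sum>i\<in>UNIV. (xs$i)\<^sup>2)"
          unfolding N_def by (simp add: sum.distrib sum_subtractf sum_distrib_left)
        finally show ?thesis unfolding sumc by (simp add: algebra_simps)
      qed
      have qb': "0 \<le> q" "q \<le> \<delta>\<^sup>2" using qb[OF xs] unfolding q_def by auto
      have r2: "(norm xs)\<^sup>2 \<le> \<delta>\<^sup>2" using qb'(1) unfolding q_def by simp
      have tau_a0: "a0 \<le> \<tau>s"
      proof -
        have "q\<^sup>2 \<le> \<delta>\<^sup>2 * \<delta>\<^sup>2" using qsq[OF xs] unfolding q_def .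
        then have "\<mu> * q\<^sup>2 \<le> 1 * (\<delta>\<^sup>2 * \<delta>\<^sup>2)" using mu by (intro mult_mono) auto
        then show ?thesis unfolding a0_def \<tau>s_def using ts by simp
      qed
      have rate: "(T - \<tau>s) * (F / \<psi> \<tau>s) \<le> B" using B(2) tau_a0 tauT unfolding F_def by blast
      have Fd: "F' \<le> K * (F / \<psi> \<tau>s)"
        using ff_deriv_bound[OF psis, of p \<alpha>] unfolding F'_def F_def ffd_def K_def by simp
      have muq: "\<mu> * q\<^sup>2 \<le> T - \<tau>s" unfolding \<tau>s_def using tsT by simp
      have term1: "F' * (16*\<mu>\<^sup>2*q\<^sup>2*(norm xs)\<^sup>2) \<le> 1/4"
      proof -
        have nn: "16*\<mu>\<^sup>2*q\<^sup>2*(norm xs)\<^sup>2 \<ge> 0" by simp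
        have "F' * (16*\<mu>\<^sup>2*q\<^sup>2*(norm xs)\<^sup>2) \<le> K * (F / \<psi> \<tau>s) * (16*\<mu>\<^sup>2*q\<^sup>2*(norm xs)\<^sup>2)"
          using Fd nn by (rule mult_right_mono)
        also have "\<dots> = (16*\<mu>*K*(norm xs)\<^sup>2) * ((\<mu> * q\<^sup>2) * (F / \<psi> \<tau>s))"
          by (simp add: algebra_simps power2_eq_square)
        also have "\<dots> \<le> (16*\<mu>*K*\<delta>\<^sup>2) * ((T - \<tau>s) * (F / \<psi> \<tau>s))"
        proof (rule mult_mono)
          show "16*\<mu>*K*(norm xs)\<^sup>2 \<le> 16*\<mu>*K*\<delta>\<^sup>2" using r2 mu K by simp
          show "\<mu> * q\<^sup>2 * (F / \<psi> \<tau>s) \<le> (T - \<tau>s) * (F / \<psi> \<tau>s)"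
            using muq Fpos psis by (intro mult_right_mono) auto
          show "0 \<le> 16*\<mu>*K*\<delta>\<^sup>2" using mu K by simp
          show "0 \<le> \<mu> * q\<^sup>2 * (F / \<psi> \<tau>s)" using mu Fpos psis by simp
        qed
        also have "\<dots> \<le> (16*\<mu>*K*\<delta>\<^sup>2) * B"
          using rate mu K by (intro mult_left_mono) auto
        also have "\<dots> \<le> 1/4" using mu1 by (simp add: algebra_simps)
        finally show ?thesis .
      qed
      have term2: "4*\<mu>*(N*q - 2*(norm xs)\<^sup>2) \<le> 1/4"
      proof -
        have "4*\<mu>*(N*q - 2*(norm xs)\<^sup>2) \<le> 4*\<mu>*(N*\<delta>\<^sup>2)"
      proof -
        have "N * q \<le> N * \<delta>\<^sup>2" using qb' N by (intro mult_left_mono) auto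
        then have "N*q - 2*(norm xs)\<^sup>2 \<le> N*\<delta>\<^sup>2" using zero_le_power2[of "norm xs"] by linarith
        then show ?thesis using mu by (intro mult_left_mono) auto
      qed
        then show ?thesis using mu2 by (simp add: algebra_simps)
      qed
      have sum_le: "(\<Sum>i\<in>UNIV. D2 i) \<le> lam * F * (1/2)"
        unfolding sumD2 using term1 term2 lam Fpos by (intro mult_left_mono) auto
      have absv: "\<bar>v xs ts\<bar> = lam * \<psi> \<tau>s"
        using sv sig Wxs Wpos[OF tsT, of xs] by auto
      have v2: "(v xs ts)\<^sup>2 = (lam * \<psi> \<tau>s)\<^sup>2" using absv by (metis power2_abs)
      have "\<sigma> * (time_deriv v xs ts - laplacian v xs ts) \<le> \<bar>time_deriv v xs ts - laplacian v xs ts\<bar>"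
        using sig by auto
      also have "\<dots> \<le> C * \<bar>v xs ts\<bar> powr p * (ln ((v xs ts)\<^sup>2 + 2)) powr \<alpha>" using Hpde[OF xs tsI] .
      also have "\<dots> = C * ff p \<alpha> (lam * \<psi> \<tau>s)" unfolding ff_def absv v2 by simp
      also have "\<dots> \<le> lam * F / 4" unfolding F_def using lam(3) psis by simp
      finally have pde: "\<sigma> * (time_deriv v xs ts - laplacian v xs ts) \<le> lam * F / 4" .
      have "lam * F \<le> lam * F / 4 + lam * F * (1/2)"
        using time_ineq lap_ineq sum_le pde by (simp add: algebra_simps)
      then show False using lam Fpos by (simp add: field_simps)
    qed
    show "\<not> blows_up_at v T"
    proof
      assume "blows_up_at v T"
      then obtain xq tq where xq: "xq \<longlonglongrightarrow> 0" and tq: "tq \<longlonglongrightarrow> T" and tqT: "\<forall>j. tq j < T"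
        and bl: "filterlim (\<lambda>j. \<bar>v (xq j) (tq j)\<bar>) at_top sequentially"
        unfolding blows_up_at_def by blast
      define M where "M = lam * \<psi> (T - \<mu> * (3*\<delta>\<^sup>2/4)\<^sup>2)"
      have "((\<lambda>j. norm (xq j)) \<longlongrightarrow> 0) sequentially" using tendsto_norm[OF xq] by simp
      then have ev1: "\<forall>\<^sub>F j in sequentially. norm (xq j) < \<delta>/2" using \<delta> by (intro order_tendstoD(2)) auto
      have ev2: "\<forall>\<^sub>F j in sequentially. T2' < tq j" using order_tendstoD(1)[OF tq T2'(2)] .
      have ev3: "\<forall>\<^sub>F j in sequentially. M + 1 \<le> \<bar>v (xq j) (tq j)\<bar>" using bl by (simp add: filterlim_at_top)
      have "\<forall>\<^sub>F j in sequentially. False"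
        using ev1 ev2 ev3
      proof eventually_elim
        case (elim j)
        have xc: "xq j \<in> cball 0 \<delta>" using elim \<delta> by simp
        have "v (xq j) (tq j) \<le> W (xq j) (tq j)" using cmp[of 1 "xq j" "tq j"] xc elim tqT by auto
        moreover have "- v (xq j) (tq j) \<le> W (xq j) (tq j)" using cmp[of "-1" "xq j" "tq j"] xc elim tqT by auto
        ultimately have vW: "\<bar>v (xq j) (tq j)\<bar> \<le> W (xq j) (tq j)" by simp
        have "(norm (xq j))\<^sup>2 \<le> (\<delta>/2)\<^sup>2" using elim by (intro power_mono) auto
        then have q1: "3*\<delta>\<^sup>2/4 \<le> \<delta>\<^sup>2 - (norm (xq j))\<^sup>2" by (simp add: power_divide)
        have q0: "0 \<le> 3*\<delta>\<^sup>2/4" by simp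
        have "(3*\<delta>\<^sup>2/4)\<^sup>2 \<le> (\<delta>\<^sup>2 - (norm (xq j))\<^sup>2)\<^sup>2" using q1 q0 by (intro power_mono) auto
        then have "\<mu> * (3*\<delta>\<^sup>2/4)\<^sup>2 \<le> \<mu> * (\<delta>\<^sup>2 - (norm (xq j))\<^sup>2)\<^sup>2" using mu by (intro mult_left_mono) auto
        then have le: "tq j - \<mu> * (\<delta>\<^sup>2 - (norm (xq j))\<^sup>2)\<^sup>2 \<le> T - \<mu> * (3*\<delta>\<^sup>2/4)\<^sup>2" using tqT by smt
        have "\<mu> * (3*\<delta>\<^sup>2/4)\<^sup>2 > 0" using mu \<delta> by simp
        then have "T - \<mu> * (3*\<delta>\<^sup>2/4)\<^sup>2 < T" by simp
        then have "\<psi> (tq j - \<mu> * (\<delta>\<^sup>2 - (norm (xq j))\<^sup>2)\<^sup>2) \<le> \<psi> (T - \<mu> * (3*\<delta>\<^sup>2/4)\<^sup>2)"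
          using mono le by blast
        then have "W (xq j) (tq j) \<le> M" unfolding W_def M_def using lam by simp
        then show False using vW elim by simp
      qed
      then show False by simp
    qed
  qed
qed

end
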